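(* Let $d\ge1$, $r\ge1$, $n\ge d+2$, and let $K$ be a set of $d$-simplices of $K_n^d$ such that every $d$-hypercut $H$ satisfies $|\mathrm{Supp}(H)\cap K|\ge r$. Then the facet graph $G_d(K)$ is $(d+r-1)$-connected.
   Context: Fix a field $\mathbb F$. A $d$-simplex is a $(d+1)$-element subset of $[n]$ oriented by increasing order; $K_n^d$ is the complex of all subsets of $[n]$ of size at most $d+1$. For a simplex $\rho$ and $\tau=\rho\setminus\{p\}$ with $p$ the $i$-th smallest element of $\rho$, $\mathrm{sign}(\rho,\tau)=(-1)^{i-1}$. A $d$-cochain is a formal $\mathbb F$-combination of $d$-simplices; the coboundary is $\delta\tau=\sum_{p\in[n]\setminus\tau}\mathrm{sign}(\tau\cup\{p\},\tau)(\tau\cup\{p\})$, extended linearly. A $d$-cocycle is a $d$-cochain $Z$ with $\delta Z=0$; a $d$-hypercut is a nonzero $d$-cocycle $H$ such that every $d$-cocycle supported in $\mathrm{Supp}(H)$ is a scalar multiple of $H$. The facet graph $G_d(K)$ has vertex set $K$, two $d$-simplices adjacent iff they share a $(d-1)$-face. A graph is $k$-connected if deleting any set of fewer than $k$ of its vertices leaves a nonempty connected graph. *)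

theory Defs
  imports Main
begin

text \<open>A d-cochain over a field 'a is a function from nat sets to 'a vanishing outside
  the d-simplices; its value at a simplex is the coefficient of that simplex.\<close>

definition simplices :: "nat \<Rightarrow> nat \<Rightarrow> nat set set" where
  "simplices n k = {s. s \<subseteq> {1..n} \<and> card s = k + 1}"

definition cochain :: "nat \<Rightarrow> nat \<Rightarrow> (nat set \<Rightarrow> 'a::field) \<Rightarrow> bool" where
  "cochain n d f \<longleftrightarrow> (\<forall>s. s \<notin> simplices n d \<longrightarrow> f s = 0)"

text \<open>sign(rho, rho - {p}) = (-1)^(i-1) where p is the i-th smallest element of rho.\<close>
definition simplex_sign :: "nat set \<Rightarrow> nat \<Rightarrow> 'a::field" where
  "simplex_sign \<rho> p = (-1) ^ card {q \<in> \<rho>. q < p}"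

definition coboundary :: "nat \<Rightarrow> nat \<Rightarrow> (nat set \<Rightarrow> 'a::field) \<Rightarrow> nat set \<Rightarrow> 'a" where
  "coboundary n d f \<rho> =
     (if \<rho> \<in> simplices n (d + 1) then (\<Sum>p\<in>\<rho>. simplex_sign \<rho> p * f (\<rho> - {p})) else 0)"

definition cocycle :: "nat \<Rightarrow> nat \<Rightarrow> (nat set \<Rightarrow> 'a::field) \<Rightarrow> bool" where
  "cocycle n d f \<longleftrightarrow> cochain n d f \<and> (\<forall>\<rho>. coboundary n d f \<rho> = 0)"

definition supp :: "(nat set \<Rightarrow> 'a::field) \<Rightarrow> nat set set" where
  "supp f = {s. f s \<noteq> 0}"

definition hypercut :: "nat \<Rightarrow> nat \<Rightarrow> (nat set \<Rightarrow> 'a::field) \<Rightarrow> bool" where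
  "hypercut n d H \<longleftrightarrow> cocycle n d H \<and> H \<noteq> (\<lambda>_. 0) \<and>
     (\<forall>Z. cocycle n d Z \<and> supp Z \<subseteq> supp H \<longrightarrow> (\<exists>c. Z = (\<lambda>s. c * H s)))"

text \<open>Facet graph: two d-simplices are adjacent iff they are distinct and share a
  (d-1)-face, i.e. their intersection has d elements.\<close>
definition facet_adj :: "nat \<Rightarrow> nat set \<Rightarrow> nat set \<Rightarrow> bool" where
  "facet_adj d s t \<longleftrightarrow> s \<noteq> t \<and> card (s \<inter> t) = d"

definition graph_connected :: "('v \<Rightarrow> 'v \<Rightarrow> bool) \<Rightarrow> 'v set \<Rightarrow> bool" where
  "graph_connected E V \<longleftrightarrow> V \<noteq> {} \<and>
     (\<forall>x\<in>V. \<forall>y\<in>V. (\<lambda>a b. a \<in> V \<and> b \<in> V \<and> E a b)\<^sup>*\<^sup>* x y)"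

definition k_connected :: "('v \<Rightarrow> 'v \<Rightarrow> bool) \<Rightarrow> 'v set \<Rightarrow> nat \<Rightarrow> bool" where
  "k_connected E V k \<longleftrightarrow>
     (\<forall>S. S \<subseteq> V \<and> finite S \<and> card S < k \<longrightarrow> graph_connected E (V - S))"

end

theory Submission
  imports Defs
begin


lemma sign_swap_lt:
  fixes \<rho> :: "nat set"
  assumes "finite \<rho>" "p \<in> \<rho>" "q \<in> \<rho>" "p < q"
  shows "(simplex_sign \<rho> p * simplex_sign (\<rho> - {p}) q + simplex_sign \<rho> q * simplex_sign (\<rho> - {q}) p :: 'a::field) = 0"
proof -
  have e1: "{x \<in> \<rho> - {q}. x < p} = {x\<in>\<rho>. x<p}" using assms by auto
  have e2: "{x \<in> \<rho> - {p}. x < q} = {x\<in>\<rho>. x<q} - {p}" by auto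
  have pin: "p \<in> {x\<in>\<rho>. x<q}" using assms by auto
  have fin: "finite {x\<in>\<rho>. x<q}" using assms by auto
  have c: "card ({x\<in>\<rho>. x<q} - {p}) = card {x\<in>\<rho>. x<q} - 1"
    using pin fin by (simp add: card_Diff_singleton)
  have "card {x\<in>\<rho>. x<q} \<noteq> 0" using pin fin by auto
  then obtain c where cc: "card {x\<in>\<rho>. x<q} = Suc c" by (cases "card {x\<in>\<rho>. x<q}") auto
  show ?thesis unfolding simplex_sign_def e1 e2 c cc by simp
qed

lemma sign_swap:
  fixes \<rho> :: "nat set"
  assumes "finite \<rho>" "p \<in> \<rho>" "q \<in> \<rho>" "p \<noteq> q"
  shows "(simplex_sign \<rho> p * simplex_sign (\<rho> - {p}) q + simplex_sign \<rho> q * simplex_sign (\<rho> - {q}) p :: 'a::field) = 0"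
proof (cases "p < q")
  case True then show ?thesis using sign_swap_lt assms by blast
next
  case False then have "q < p" using assms by auto
  then show ?thesis using sign_swap_lt[of \<rho> q p] assms by (simp add: add.commute)
qed

lemma pair_cancel:
  fixes g :: "nat \<Rightarrow> nat \<Rightarrow> 'a::ab_group_add"
  assumes "finite A" "\<And>p q. p\<in>A \<Longrightarrow> q\<in>A \<Longrightarrow> p\<noteq>q \<Longrightarrow> g p q + g q p = 0"
  shows "(\<Sum>p\<in>A. \<Sum>q\<in>A-{p}. g p q) = 0"
  using assms
proof (induction A rule: finite_induct)
  case empty then show ?case by simp
next
  case (insert a F)
  have IH: "(\<Sum>p\<in>F. \<Sum>q\<in>F-{p}. g p q) = 0" using insert by auto
  have s1: "(\<Sum>q\<in>insert a F - {a}. g a q) = (\<Sum>q\<in>F. g a q)" using insert by simp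
  have s2: "(\<Sum>q\<in>insert a F - {p}. g p q) = g p a + (\<Sum>q\<in>F-{p}. g p q)" if "p \<in> F" for p
  proof -
    have "insert a F - {p} = insert a (F - {p})" using that insert by auto
    then show ?thesis using insert by simp
  qed
  have "(\<Sum>p\<in>insert a F. \<Sum>q\<in>insert a F-{p}. g p q)
      = (\<Sum>q\<in>F. g a q) + (\<Sum>p\<in>F. \<Sum>q\<in>insert a F-{p}. g p q)"
    using insert s1 by simp
  also have "\<dots> = (\<Sum>q\<in>F. g a q) + (\<Sum>p\<in>F. g p a + (\<Sum>q\<in>F-{p}. g p q))"
    using s2 by simp
  also have "\<dots> = (\<Sum>q\<in>F. g a q + g q a) + (\<Sum>p\<in>F. \<Sum>q\<in>F-{p}. g p q)"
    by (simp add: sum.distrib algebra_simps)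
  also have "(\<Sum>q\<in>F. g a q + g q a) = 0"
    using insert.prems insert.hyps by (intro sum.neutral) auto
  finally show ?case using IH by simp
qed

lemma simplices_finite: "finite (simplices n k)"
  unfolding simplices_def by (rule finite_subset[of _ "Pow {1..n}"]) auto

lemma cocycle_cob:
  assumes "1 \<le> d"
  shows "cocycle n d (coboundary n (d-1) (f :: nat set \<Rightarrow> 'a::field))"
  unfolding cocycle_def
proof
  have dd: "d - 1 + 1 = d" using assms by simp
  show "cochain n d (coboundary n (d-1) f)"
    unfolding cochain_def coboundary_def dd by simp
  show "\<forall>\<rho>. coboundary n d (coboundary n (d - 1) f) \<rho> = 0"
  proof
    fix \<rho>
    show "coboundary n d (coboundary n (d - 1) f) \<rho> = 0"
    proof (cases "\<rho> \<in> simplices n (d+1)")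
      case False then show ?thesis by (simp add: coboundary_def)
    next
      case True
      then have fin: "finite \<rho>" and cr: "card \<rho> = d + 2" and sub: "\<rho> \<subseteq> {1..n}"
        unfolding simplices_def using finite_subset by auto
      have mem: "\<rho> - {p} \<in> simplices n (d - 1 + 1)" if "p \<in> \<rho>" for p
        using that fin cr sub assms unfolding simplices_def by auto
      let ?g = "\<lambda>p q. simplex_sign \<rho> p * simplex_sign (\<rho> - {p}) q * f (\<rho> - {p} - {q})"
      have "coboundary n d (coboundary n (d - 1) f) \<rho>
          = (\<Sum>p\<in>\<rho>. simplex_sign \<rho> p * (\<Sum>q\<in>\<rho>-{p}. simplex_sign (\<rho> - {p}) q * f (\<rho> - {p} - {q})))"
        using True mem unfolding coboundary_def by (auto intro!: sum.cong)
      also have "\<dots> = (\<Sum>p\<in>\<rho>. \<Sum>q\<in>\<rho>-{p}. ?g p q)"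
        by (simp add: sum_distrib_left mult.assoc)
      also have "\<dots> = 0"
      proof (rule pair_cancel[OF fin])
        fix p q assume "p \<in> \<rho>" "q \<in> \<rho>" "p \<noteq> q"
        then have "?g p q + ?g q p = (simplex_sign \<rho> p * simplex_sign (\<rho> - {p}) q + simplex_sign \<rho> q * simplex_sign (\<rho> - {q}) p) * f (\<rho> - {p} - {q})"
          by (simp add: algebra_simps Diff_insert2[symmetric] insert_commute)
        also have "\<dots> = 0" by (simp add: sign_swap[OF fin \<open>p \<in> \<rho>\<close> \<open>q \<in> \<rho>\<close> \<open>p \<noteq> q\<close>])
        finally show "?g p q + ?g q p = 0" .
      qed
      finally show ?thesis .
    qed
  qed
qed



definition cutf :: "nat set \<Rightarrow> nat set \<Rightarrow> nat set \<Rightarrow> 'a::field" where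
  "cutf \<nu> X \<tau> = (if \<nu> \<subseteq> \<tau> \<and> card (\<tau> - \<nu>) = 1 \<and> \<tau> - \<nu> \<subseteq> X then simplex_sign \<tau> (Min (\<tau> - \<nu>)) else 0)"

lemma cutf_val:
  assumes "finite \<nu>" "w \<notin> \<nu>"
  shows "cutf \<nu> X (insert w \<nu>) = (if w \<in> X then simplex_sign (insert w \<nu>) w else 0)"
proof -
  have "insert w \<nu> - \<nu> = {w}" using assms by auto
  then show ?thesis unfolding cutf_def by auto
qed

lemma Z_val:
  assumes "finite \<nu>" "u \<noteq> w" "u \<notin> \<nu>" "w \<notin> \<nu>" "\<sigma> = insert u (insert w \<nu>)"
  shows "(\<Sum>p\<in>\<sigma>. simplex_sign \<sigma> p * (cutf \<nu> X (\<sigma> - {p}) :: 'a::field))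
     = (if w\<in>X then simplex_sign \<sigma> u * simplex_sign (\<sigma>-{u}) w else 0)
     + (if u\<in>X then simplex_sign \<sigma> w * simplex_sign (\<sigma>-{w}) u else 0)"
proof -
  have su: "\<sigma> - {u} = insert w \<nu>" using assms by auto
  have sw: "\<sigma> - {w} = insert u \<nu>" using assms by auto
  have z: "(\<Sum>p\<in>\<nu>. simplex_sign \<sigma> p * (cutf \<nu> X (\<sigma> - {p}) :: 'a)) = 0"
    by (intro sum.neutral) (auto simp: cutf_def)
  have "(\<Sum>p\<in>\<sigma>. simplex_sign \<sigma> p * (cutf \<nu> X (\<sigma> - {p}) :: 'a))
      = simplex_sign \<sigma> u * cutf \<nu> X (\<sigma> - {u}) + (simplex_sign \<sigma> w * cutf \<nu> X (\<sigma> - {w})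
        + (\<Sum>p\<in>\<nu>. simplex_sign \<sigma> p * (cutf \<nu> X (\<sigma> - {p}) :: 'a)))"
    using assms by simp
  also have "\<dots> = simplex_sign \<sigma> u * cutf \<nu> X (insert w \<nu>) + simplex_sign \<sigma> w * cutf \<nu> X (insert u \<nu>)"
    using z su sw by simp
  finally show ?thesis using assms su sw by (simp add: cutf_val)
qed

lemma Z_zero:
  assumes "\<not> \<nu> \<subseteq> \<sigma>"
  shows "(\<Sum>p\<in>\<sigma>. simplex_sign \<sigma> p * (cutf \<nu> X (\<sigma> - {p}) :: 'a::field)) = 0"
  using assms by (intro sum.neutral) (auto simp: cutf_def)

lemma sign_nz: "(simplex_sign s p :: 'a::field) \<noteq> 0"
  unfolding simplex_sign_def by simp

lemma cut_cocycle:
  assumes d1: "1 \<le> d" and nu: "\<nu> \<subseteq> {1..n}" "card \<nu> + 1 = d"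
    and X: "X \<subseteq> {1..n} - \<nu>" and a: "a \<in> X" and b: "b \<in> {1..n} - \<nu> - X"
    and L: "L \<subseteq> simplices n d"
    and nc: "\<forall>\<sigma>\<in>L. \<not>(\<exists>x\<in>X. \<exists>y\<in>{1..n}-\<nu>-X. \<sigma> = insert x (insert y \<nu>))"
  shows "\<exists>Z::nat set \<Rightarrow> 'a::field. cocycle n d Z \<and> Z \<noteq> (\<lambda>_. 0) \<and> supp Z \<inter> L = {}"
proof -
  define Z where "Z = coboundary n (d-1) (cutf \<nu> X :: nat set \<Rightarrow> 'a)"
  have dd: "d - 1 + 1 = d" using d1 by simp
  have finnu: "finite \<nu>" using nu finite_subset by blast
  have Zs: "Z \<sigma> = (\<Sum>p\<in>\<sigma>. simplex_sign \<sigma> p * cutf \<nu> X (\<sigma> - {p}))" if "\<sigma> \<in> simplices n d" for \<sigma>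
    using that unfolding Z_def coboundary_def dd by simp
  have cz: "cocycle n d Z" unfolding Z_def by (rule cocycle_cob[OF d1])
  define \<sigma>0 where "\<sigma>0 = insert a (insert b \<nu>)"
  have ab: "a \<noteq> b" "a \<notin> \<nu>" "b \<notin> \<nu>" "b \<notin> X" using a b X by auto
  have s0: "\<sigma>0 \<in> simplices n d"
    using ab a b X nu finnu unfolding simplices_def \<sigma>0_def by auto
  have "Z \<sigma>0 = simplex_sign \<sigma>0 b * simplex_sign (\<sigma>0-{b}) a"
    using Zs[OF s0] Z_val[OF finnu ab(1,2,3) \<sigma>0_def, of X] a ab by simp
  then have "Z \<sigma>0 \<noteq> 0" by (simp add: sign_nz)
  then have nz: "Z \<noteq> (\<lambda>_. 0)" by auto
  have "Z \<sigma> = 0" if sL: "\<sigma> \<in> L" for \<sigma>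
  proof -
    have ss: "\<sigma> \<in> simplices n d" using sL L by auto
    then have fs: "finite \<sigma>" and cs: "card \<sigma> = d + 1" and sub: "\<sigma> \<subseteq> {1..n}"
      unfolding simplices_def using finite_subset by auto
    show ?thesis
    proof (cases "\<nu> \<subseteq> \<sigma>")
      case False then show ?thesis using Zs[OF ss] Z_zero by simp
    next
      case True
      have "card (\<sigma> - \<nu>) = 2" using True fs cs nu by (simp add: card_Diff_subset finnu)
      then obtain u w where uw: "\<sigma> - \<nu> = {u, w}" "u \<noteq> w" by (auto simp: card_2_iff)
      have uw2: "u \<notin> \<nu>" "w \<notin> \<nu>" "u \<in> {1..n}" "w \<in> {1..n}" using uw sub by auto
      have se: "\<sigma> = insert u (insert w \<nu>)" using uw True by auto
      have se2: "\<sigma> = insert w (insert u \<nu>)" using se by auto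
      have iff: "u \<in> X \<longleftrightarrow> w \<in> X"
        using nc sL se se2 uw2 by blast
      have fsig: "finite \<sigma>" by (rule fs)
      have uin: "u \<in> \<sigma>" "w \<in> \<sigma>" using se by auto
      show ?thesis
      proof (cases "u \<in> X")
        case True
        then show ?thesis using Zs[OF ss] Z_val[OF finnu uw(2) uw2(1,2) se, of X, where 'a='a] iff
            sign_swap[OF fsig uin(1,2) uw(2), where 'a='a] by simp
      next
        case False
        then show ?thesis using Zs[OF ss] Z_val[OF finnu uw(2) uw2(1,2) se, of X, where 'a='a] iff by simp
      qed
    qed
  qed
  then have "supp Z \<inter> L = {}" unfolding supp_def by auto
  then show ?thesis using cz nz by blast
qed



lemma cocycle_lin:
  fixes A B :: "nat set \<Rightarrow> 'a::field"
  assumes "cocycle n d A" "cocycle n d B"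
  shows "cocycle n d (\<lambda>x. A x - c * B x)"
proof -
  have h: "\<forall>\<rho>. coboundary n d A \<rho> = 0" "\<forall>\<rho>. coboundary n d B \<rho> = 0"
    "cochain n d A" "cochain n d B" using assms unfolding cocycle_def by auto
  have e: "coboundary n d (\<lambda>x. A x - c * B x) \<rho> = coboundary n d A \<rho> - c * coboundary n d B \<rho>" for \<rho>
    unfolding coboundary_def by (simp add: algebra_simps sum_subtractf sum_distrib_left)
  have "cochain n d (\<lambda>x. A x - c * B x)" using h(3,4) unfolding cochain_def by simp
  then show ?thesis unfolding cocycle_def using e h by simp
qed
lemma hypercut_below:
  fixes Z :: "nat set \<Rightarrow> 'a::field"
  assumes "cocycle n d Z" "Z \<noteq> (\<lambda>_. 0)"
  shows "\<exists>H::nat set \<Rightarrow> 'a. hypercut n d H \<and> supp H \<subseteq> supp Z"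
proof -
  let ?P = "\<lambda>H::nat set \<Rightarrow> 'a. cocycle n d H \<and> H \<noteq> (\<lambda>_. 0) \<and> supp H \<subseteq> supp Z"
  have "?P Z" using assms by simp
  then obtain H where PH: "?P H" and min: "\<forall>H'. ?P H' \<longrightarrow> card (supp H) \<le> card (supp H')"
    using ex_has_least_nat[of ?P Z "\<lambda>H. card (supp H)"] by blast
  have finsupp: "finite (supp G)" if "cocycle n d G" for G :: "nat set \<Rightarrow> 'a"
  proof -
    have "supp G \<subseteq> simplices n d" using that unfolding cocycle_def cochain_def supp_def by auto
    then show ?thesis using simplices_finite finite_subset by blast
  qed
  have "hypercut n d H"
    unfolding hypercut_def
  proof (intro conjI allI impI)
    show "cocycle n d H" "H \<noteq> (\<lambda>_. 0)" using PH by auto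
    fix Z' :: "nat set \<Rightarrow> 'a"
    assume Z': "cocycle n d Z' \<and> supp Z' \<subseteq> supp H"
    obtain s where s: "H s \<noteq> 0" using PH by auto
    define c where "c = Z' s / H s"
    define W where "W = (\<lambda>x. Z' x - c * H x)"
    have cW: "cocycle n d W" unfolding W_def using cocycle_lin Z' PH by blast
    have Ws: "W s = 0" unfolding W_def c_def using s by simp
    have sW: "supp W \<subseteq> supp H - {s}"
      using Z' Ws unfolding W_def supp_def by auto
    have "W = (\<lambda>_. 0)"
    proof (rule ccontr)
      assume "W \<noteq> (\<lambda>_. 0)"
      then have "?P W" using cW sW PH by auto
      then have le: "card (supp H) \<le> card (supp W)" using min by blast
      have "supp W \<subset> supp H" using sW s unfolding supp_def by auto
      then have "card (supp W) < card (supp H)" using finsupp PH by (meson psubset_card_mono)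
      then show False using le by simp
    qed
    then have "Z' = (\<lambda>x. c * H x)" unfolding W_def by (auto simp: fun_eq_iff dest: fun_cong)
    then show "\<exists>c. Z' = (\<lambda>s. c * H s)" by blast
  qed
  then show ?thesis using PH by blast
qed



definition cutcond :: "nat set \<Rightarrow> nat \<Rightarrow> nat set set \<Rightarrow> bool" where
  "cutcond V d K \<longleftrightarrow> (\<forall>\<nu> X. \<nu> \<subseteq> V \<longrightarrow> card \<nu> + 1 = d \<longrightarrow> X \<subseteq> V - \<nu> \<longrightarrow> X \<noteq> {} \<longrightarrow> X \<noteq> V - \<nu> \<longrightarrow>
      (\<exists>\<sigma>\<in>K. \<exists>x\<in>X. \<exists>y\<in>V-\<nu>-X. \<sigma> = insert x (insert y \<nu>)))"

definition lk :: "nat \<Rightarrow> nat set set \<Rightarrow> nat set set" where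
  "lk v K = (\<lambda>s. s - {v}) ` {s\<in>K. v \<in> s}"

lemma gc_transfer:
  assumes "graph_connected E A" "B = f ` A" "\<And>a b. a\<in>A \<Longrightarrow> b\<in>A \<Longrightarrow> E a b \<Longrightarrow> E' (f a) (f b)"
  shows "graph_connected E' B"
proof -
  have step: "(\<lambda>a b. a\<in>B \<and> b\<in>B \<and> E' a b)\<^sup>*\<^sup>* (f x) (f y)"
    if "(\<lambda>a b. a\<in>A \<and> b\<in>A \<and> E a b)\<^sup>*\<^sup>* x y" for x y
    using that
  proof (induction rule: rtranclp_induct)
    case base show ?case by simp
  next
    case (step y z)
    then have "f y \<in> B" "f z \<in> B" "E' (f y) (f z)" using assms(2,3) by auto
    then show ?case using step.IH by (auto intro: rtranclp.rtrancl_into_rtrancl)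
  qed
  show ?thesis using assms(1,2) step unfolding graph_connected_def by auto
qed

lemma rt_mono:
  assumes "(\<lambda>a b. a\<in>A \<and> b\<in>A \<and> E a b)\<^sup>*\<^sup>* x y" "A \<subseteq> B"
  shows "(\<lambda>a b. a\<in>B \<and> b\<in>B \<and> E a b)\<^sup>*\<^sup>* x y"
  using assms by (induction rule: rtranclp_induct) (auto intro: rtranclp.rtrancl_into_rtrancl)

lemma cover:
  assumes "cutcond V d K" "1 \<le> d" "finite V" "d+2 \<le> card V" "\<sigma> \<subseteq> V" "card \<sigma> = d"
  shows "\<exists>\<kappa>\<in>K. \<sigma> \<subseteq> \<kappa>"
proof -
  have fs: "finite \<sigma>" using assms finite_subset by blast
  obtain a where a: "a \<in> \<sigma>" using assms by fastforce
  define \<nu> where "\<nu> = \<sigma> - {a}"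
  have cn: "card \<nu> + 1 = d" using a fs assms unfolding \<nu>_def by (simp add: card_Diff_singleton)
  have nuV: "\<nu> \<subseteq> V" using assms unfolding \<nu>_def by auto
  have "card (V - \<nu>) = card V - card \<nu>" using nuV assms(3) by (meson card_Diff_subset finite_subset)
  then have "card (V - \<nu>) \<ge> 3" using cn assms by simp
  then have ne: "{a} \<noteq> V - \<nu>" by (metis card.empty card_insert_disjoint empty_iff finite.emptyI numeral_le_one_iff One_nat_def semiring_norm(70))
  have aX: "{a} \<subseteq> V - \<nu>" using a assms unfolding \<nu>_def by auto
  obtain \<kappa> x y where k: "\<kappa> \<in> K" "x \<in> {a}" "\<kappa> = insert x (insert y \<nu>)"
    using assms(1) nuV cn aX ne unfolding cutcond_def by blast
  then have "\<sigma> \<subseteq> \<kappa>" unfolding \<nu>_def by auto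
  then show ?thesis using k by blast
qed

lemma base1:
  assumes "finite V" "3 \<le> card V" "\<forall>\<sigma>\<in>K. \<sigma> \<subseteq> V \<and> card \<sigma> = 2" "cutcond V 1 K"
  shows "graph_connected (facet_adj 1) K"
proof -
  let ?R = "\<lambda>a b. a\<in>K \<and> b\<in>K \<and> facet_adj 1 a b"
  have cc: "\<And>X. X \<subseteq> V \<Longrightarrow> X \<noteq> {} \<Longrightarrow> X \<noteq> V \<Longrightarrow> \<exists>\<sigma>\<in>K. \<exists>x\<in>X. \<exists>y\<in>V-X. \<sigma> = {x, y}"
  proof -
    fix X assume "X \<subseteq> V" "X \<noteq> {}" "X \<noteq> V"
    then show "\<exists>\<sigma>\<in>K. \<exists>x\<in>X. \<exists>y\<in>V-X. \<sigma> = {x, y}"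
      using assms(4)[unfolded cutcond_def, rule_format, of "{}" X] by simp
  qed
  have adj: "\<sigma>1 = \<sigma> \<or> facet_adj 1 \<sigma>1 \<sigma>" if "\<sigma>1 \<in> K" "\<sigma> \<in> K" "x \<in> \<sigma>1" "x \<in> \<sigma>" for \<sigma>1 \<sigma> x
  proof (cases "\<sigma>1 = \<sigma>")
    case False
    have c1: "card \<sigma>1 = 2" "card \<sigma> = 2" using that assms by auto
    then have f: "finite \<sigma>1" "finite \<sigma>" by (auto intro: card_ge_0_finite)
    have "card (\<sigma>1 \<inter> \<sigma>) \<noteq> 0" using that f by auto
    moreover have "card (\<sigma>1 \<inter> \<sigma>) \<le> 2" using c1 f card_mono[OF f(1), of "\<sigma>1 \<inter> \<sigma>"] by auto
    moreover have "card (\<sigma>1 \<inter> \<sigma>) \<noteq> 2"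
    proof
      assume "card (\<sigma>1 \<inter> \<sigma>) = 2"
      then have "\<sigma>1 \<inter> \<sigma> = \<sigma>1" "\<sigma>1 \<inter> \<sigma> = \<sigma>" using c1 f card_subset_eq[OF f(1), of "\<sigma>1 \<inter> \<sigma>"] card_subset_eq[OF f(2), of "\<sigma>1 \<inter> \<sigma>"]
        by auto
      then show False using False by simp
    qed
    ultimately have "card (\<sigma>1 \<inter> \<sigma>) = 1" by linarith
    then show ?thesis using False unfolding facet_adj_def by simp
  qed simp
  have main: "?R\<^sup>*\<^sup>* \<sigma>0 \<tau>" if s0: "\<sigma>0 \<in> K" and t: "\<tau> \<in> K" for \<sigma>0 \<tau>
  proof -
    define Xs where "Xs = {v\<in>V. \<exists>\<sigma>\<in>K. v\<in>\<sigma> \<and> ?R\<^sup>*\<^sup>* \<sigma>0 \<sigma>}"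
    have ext: "?R\<^sup>*\<^sup>* \<sigma>0 \<sigma>" if xs: "x \<in> Xs" "\<sigma> \<in> K" "x \<in> \<sigma>" for x \<sigma>
    proof -
      obtain \<sigma>1 where "\<sigma>1 \<in> K" "x \<in> \<sigma>1" "?R\<^sup>*\<^sup>* \<sigma>0 \<sigma>1" using xs(1) unfolding Xs_def by blast
      then show ?thesis using adj[of \<sigma>1 \<sigma> x] xs by (auto intro: rtranclp.rtrancl_into_rtrancl)
    qed
    have "Xs = V"
    proof (rule ccontr)
      assume ne: "Xs \<noteq> V"
      have "card \<sigma>0 = 2" using s0 assms by auto
      then obtain v where v: "v \<in> \<sigma>0" by (auto simp: card_2_iff)
      then have "v \<in> Xs" using s0 assms unfolding Xs_def by auto
      then have "Xs \<noteq> {}" by auto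
      moreover have "Xs \<subseteq> V" unfolding Xs_def by auto
      ultimately obtain \<sigma> x y where sx: "\<sigma> \<in> K" "x \<in> Xs" "y \<in> V - Xs" "\<sigma> = {x, y}"
        using cc ne by blast
      then have "?R\<^sup>*\<^sup>* \<sigma>0 \<sigma>" using ext by auto
      then have "y \<in> Xs" using sx unfolding Xs_def by auto
      then show False using sx by auto
    qed
    have "card \<tau> = 2" using t assms by auto
    then obtain v where v: "v \<in> \<tau>" by (auto simp: card_2_iff)
    then have "v \<in> Xs" using t assms \<open>Xs = V\<close> by auto
    then show ?thesis using ext t v by blast
  qed
  have "K \<noteq> {}"
  proof -
    have "V \<noteq> {}" using assms(2) by auto
    then obtain v where v: "v \<in> V" by blast
    have "{v} \<noteq> V" using assms(2) by auto
    then obtain \<sigma> where "\<sigma> \<in> K" using cc[of "{v}"] v by auto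
    then show ?thesis by auto
  qed
  then show ?thesis unfolding graph_connected_def using main by blast
qed



lemma comb:
  fixes d :: nat and V :: "nat set" and K T :: "nat set set"
  assumes "1 \<le> d" "finite V" "d + 2 \<le> card V" "\<forall>\<sigma>\<in>K. \<sigma> \<subseteq> V \<and> card \<sigma> = d + 1"
    "cutcond V d K" "T \<subseteq> K" "card T < max 1 d"
  shows "graph_connected (facet_adj d) (K - T)"
  using assms
proof (induction d arbitrary: V K T rule: nat_induct_at_least)
  case base
  have finK: "finite K" using base.prems(1,3) by (rule_tac finite_subset[of K "Pow V"]) auto
  then have "finite T" using base.prems(5) finite_subset by blast
  then have T0: "T = {}" using base.prems(6) by simp
  show ?case unfolding T0 Diff_empty
    by (rule base1) (use base.prems in auto)
next
  case (Suc m)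
  note IH = Suc.IH and pr = Suc.prems
  have finK: "finite K" using pr(1,3) by (rule_tac finite_subset[of K "Pow V"]) auto
  have finT: "finite T" using pr(5) finK finite_subset by blast
  have cT: "card T \<le> m" using pr(6) by simp
  have finS: "finite \<sigma>" "card \<sigma> = Suc m + 1" "\<sigma> \<subseteq> V" if "\<sigma> \<in> K" for \<sigma>
    using that pr(3) by (auto intro: card_ge_0_finite)
  define good where "good v \<longleftrightarrow> v \<in> V \<and> card {t\<in>T. v\<in>t} < m" for v
  define C where "C v = {\<sigma>\<in>K-T. v\<in>\<sigma>}" for v
  have notsub: "\<not> V \<subseteq> t" if "t \<in> K" for t
  proof
    assume "V \<subseteq> t"
    then have "card V \<le> card t" using finS[OF that] card_mono by blast
    then show False using finS[OF that] pr(2) by simp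
  qed
  have G1: "graph_connected (facet_adj (Suc m)) (C v)" if gv: "good v" for v
  proof -
    have vV: "v \<in> V" using gv unfolding good_def by simp
    have a1: "finite (V - {v})" using pr(1) by simp
    have a2: "m + 2 \<le> card (V - {v})" using pr(1,2) vV by simp
    have a3: "\<forall>s\<in>lk v K. s \<subseteq> V - {v} \<and> card s = m + 1"
    proof
      fix s assume "s \<in> lk v K"
      then obtain \<sigma> where s: "\<sigma> \<in> K" "v \<in> \<sigma>" "s = \<sigma> - {v}" unfolding lk_def by auto
      then show "s \<subseteq> V - {v} \<and> card s = m + 1" using finS[OF s(1)] by auto
    qed
    have a4: "cutcond (V - {v}) m (lk v K)"
      unfolding cutcond_def
    proof (intro allI impI)
      fix \<nu> X
      assume h: "\<nu> \<subseteq> V - {v}" "card \<nu> + 1 = m" "X \<subseteq> V - {v} - \<nu>" "X \<noteq> {}" "X \<noteq> V - {v} - \<nu>"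
      have fnu: "finite \<nu>" using h(1) pr(1) finite_subset by blast
      have vn: "v \<notin> \<nu>" using h(1) by auto
      have e: "V - insert v \<nu> = V - {v} - \<nu>" by auto
      have "\<exists>\<sigma>\<in>K. \<exists>x\<in>X. \<exists>y\<in>V - insert v \<nu> - X. \<sigma> = insert x (insert y (insert v \<nu>))"
        using pr(4)[unfolded cutcond_def, rule_format, of "insert v \<nu>" X] h vV fnu vn e by auto
      then obtain \<sigma> x y where sx: "\<sigma> \<in> K" "x \<in> X" "y \<in> V - {v} - \<nu> - X"
          "\<sigma> = insert x (insert y (insert v \<nu>))" using e by auto
      have "x \<noteq> v" using sx h by auto
      then have "\<sigma> - {v} = insert x (insert y \<nu>)" using sx vn by auto
      moreover have "\<sigma> - {v} \<in> lk v K" using sx unfolding lk_def by auto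
      ultimately show "\<exists>\<sigma>\<in>lk v K. \<exists>x\<in>X. \<exists>y\<in>V - {v} - \<nu> - X. \<sigma> = insert x (insert y \<nu>)"
        using sx by metis
    qed
    have a5: "lk v T \<subseteq> lk v K" using pr(5) unfolding lk_def by auto
    have "card (lk v T) \<le> card {t\<in>T. v\<in>t}" unfolding lk_def by (rule card_image_le) (use finT in auto)
    then have a6: "card (lk v T) < max 1 m" using gv unfolding good_def by simp
    have gc: "graph_connected (facet_adj m) (lk v K - lk v T)"
      using IH[OF a1 a2 a3 a4 a5 a6] .
    show ?thesis
    proof (rule gc_transfer[OF gc, where f = "insert v"])
      show "C v = insert v ` (lk v K - lk v T)"
      proof
        show "C v \<subseteq> insert v ` (lk v K - lk v T)"
        proof
          fix \<sigma> assume "\<sigma> \<in> C v"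
          then have s: "\<sigma> \<in> K" "\<sigma> \<notin> T" "v \<in> \<sigma>" unfolding C_def by auto
          have "\<sigma> - {v} \<notin> lk v T"
          proof
            assume "\<sigma> - {v} \<in> lk v T"
            then obtain t where "t \<in> T" "v \<in> t" "\<sigma> - {v} = t - {v}" unfolding lk_def by auto
            then have "\<sigma> = t" using s by (metis insert_Diff)
            then show False using s \<open>t \<in> T\<close> by simp
          qed
          moreover have "\<sigma> - {v} \<in> lk v K" using s unfolding lk_def by auto
          moreover have "\<sigma> = insert v (\<sigma> - {v})" using s by auto
          ultimately show "\<sigma> \<in> insert v ` (lk v K - lk v T)" by blast
        qed
        show "insert v ` (lk v K - lk v T) \<subseteq> C v"
        proof
          fix \<tau> assume "\<tau> \<in> insert v ` (lk v K - lk v T)"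
          then obtain s where s: "s \<in> lk v K" "s \<notin> lk v T" "\<tau> = insert v s" by auto
          then obtain \<sigma> where \<sigma>: "\<sigma> \<in> K" "v \<in> \<sigma>" "s = \<sigma> - {v}" unfolding lk_def by auto
          then have "\<tau> = \<sigma>" using s by auto
          moreover have "\<sigma> \<notin> T" using s \<sigma> unfolding lk_def by auto
          ultimately show "\<tau> \<in> C v" using \<sigma> unfolding C_def by auto
        qed
      qed
    next
      fix a b assume ab: "a \<in> lk v K - lk v T" "b \<in> lk v K - lk v T" "facet_adj m a b"
      have va: "v \<notin> a" "v \<notin> b" "finite a" "finite b" using ab a3 finite_subset[OF _ a1] by auto
      have "insert v a \<noteq> insert v b" using va ab(3) unfolding facet_adj_def by (metis insert_ident)
      moreover have "insert v a \<inter> insert v b = insert v (a \<inter> b)" by auto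
      moreover have "card (insert v (a \<inter> b)) = Suc m" using va ab(3) unfolding facet_adj_def by simp
      ultimately show "facet_adj (Suc m) (insert v a) (insert v b)" unfolding facet_adj_def by simp
    qed
  qed
  have G2: "\<exists>v\<in>\<sigma>. good v" if s: "\<sigma> \<in> K - T" for \<sigma>
  proof (rule ccontr)
    assume "\<not> (\<exists>v\<in>\<sigma>. good v)"
    then have ng: "\<And>v. v \<in> \<sigma> \<Longrightarrow> card {t\<in>T. v\<in>t} \<ge> m" using finS[of \<sigma>] s unfolding good_def by force
    have all: "\<And>v. v \<in> \<sigma> \<Longrightarrow> {t\<in>T. v\<in>t} = T"
    proof -
      fix v assume "v \<in> \<sigma>"
      then have "card T \<le> card {t\<in>T. v\<in>t}" using ng[of v] cT by linarith
      then show "{t\<in>T. v\<in>t} = T" by (intro card_seteq[OF finT]) auto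
    qed
    have "\<sigma> \<noteq> {}" using finS(2)[of \<sigma>] s by auto
    then obtain v0 where v0: "v0 \<in> \<sigma>" by blast
    have "T \<noteq> {}"
    proof
      assume "T = {}"
      then have "card {t\<in>T. v0\<in>t} = 0" by simp
      then show False using ng[OF v0] pr(6) Suc.hyps by simp
    qed
    then obtain t where t: "t \<in> T" by blast
    have "\<sigma> \<subseteq> t" using all t by blast
    moreover have "t \<in> K" using t pr(5) by auto
    ultimately have "\<sigma> = t" using finS[of t] finS[of \<sigma>] s card_subset_eq[of t \<sigma>] by auto
    then show False using s t by simp
  qed
  have G3: "\<exists>\<kappa>\<in>K-T. u\<in>\<kappa> \<and> w\<in>\<kappa>" if gu: "good u" and gw: "good w" and uw: "u \<noteq> w" for u w
  proof -
    define P where "P = {t\<in>T. u\<in>t \<and> w\<in>t}"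
    have "card P \<le> card {t\<in>T. u\<in>t}" unfolding P_def by (rule card_mono) (use finT in auto)
    then have cP: "card P < m" using gu unfolding good_def by simp
    define zf where "zf t = (SOME z. z \<in> V \<and> z \<notin> t)" for t
    have zf: "zf t \<in> V" "zf t \<notin> t" if "t \<in> T" for t
    proof -
      have "\<exists>z. z \<in> V \<and> z \<notin> t" using notsub[of t] that pr(5) by auto
      then show "zf t \<in> V" "zf t \<notin> t" unfolding zf_def by (metis (mono_tags, lifting) someI_ex)+
    qed
    define Z where "Z = zf ` P"
    have cZ: "card Z < m" unfolding Z_def using cP card_image_le[of P zf] finT P_def by (metis (no_types, lifting) finite_subset le_less_trans mem_Collect_eq subsetI)
    have fZ: "finite Z" unfolding Z_def P_def using finT by auto
    define A where "A = insert u (insert w Z)"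
    have fA: "finite A" unfolding A_def using fZ by simp
    have cA: "card A \<le> Suc m"
    proof -
      have "card A \<le> Suc (Suc (card Z))" unfolding A_def using fZ
        by (metis card_insert_le_m1 Suc_le_mono card_insert_if finite_insert le_SucI order_refl)
      then show ?thesis using cZ by simp
    qed
    have AV: "A \<subseteq> V" unfolding A_def Z_def P_def using gu gw zf unfolding good_def by auto
    have "Suc m - card A \<le> card (V - A)" using AV pr(1,2) cA by (simp add: card_Diff_subset finite_subset[OF AV])
    then obtain B where B: "B \<subseteq> V - A" "card B = Suc m - card A" "finite B"
      using obtain_subset_with_card_n by metis
    define \<sigma>' where "\<sigma>' = A \<union> B"
    have c\<sigma>: "card \<sigma>' = Suc m" unfolding \<sigma>'_def using B fA cA by (subst card_Un_disjoint) auto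
    have \<sigma>V: "\<sigma>' \<subseteq> V" unfolding \<sigma>'_def using AV B by auto
    obtain \<kappa> where \<kappa>: "\<kappa> \<in> K" "\<sigma>' \<subseteq> \<kappa>" using cover[OF pr(4) _ pr(1,2) \<sigma>V c\<sigma>] by auto
    have uwk: "u \<in> \<kappa>" "w \<in> \<kappa>" using \<kappa> unfolding \<sigma>'_def A_def by auto
    have "\<kappa> \<notin> T"
    proof
      assume kT: "\<kappa> \<in> T"
      then have "\<kappa> \<in> P" unfolding P_def using uwk by auto
      then have "zf \<kappa> \<in> \<sigma>'" unfolding \<sigma>'_def A_def Z_def by auto
      then show False using zf(2)[OF kT] \<kappa> by auto
    qed
    then show ?thesis using \<kappa> uwk by auto
  qed
  have exg: "\<exists>v. good v"
  proof (cases "T = {}")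
    case True
    have "V \<noteq> {}" using pr(2) by auto
    then obtain v where "v \<in> V" by blast
    then show ?thesis using True Suc.hyps unfolding good_def by auto
  next
    case False
    then obtain t0 where t0: "t0 \<in> T" by blast
    then obtain v where v: "v \<in> V" "v \<notin> t0" using notsub[of t0] pr(5) by auto
    have "{t\<in>T. v\<in>t} \<subseteq> T - {t0}" using v by auto
    then have "card {t\<in>T. v\<in>t} \<le> card (T - {t0})" using finT by (simp add: card_mono)
    also have "\<dots> = card T - 1" using t0 finT by simp
    finally have le1: "card {t\<in>T. v\<in>t} \<le> card T - 1" .
    have "card T > 0" using t0 finT card_gt_0_iff by blast
    then have "card {t\<in>T. v\<in>t} < m" using le1 cT by linarith
    then show ?thesis using v unfolding good_def by auto
  qed
  let ?R = "\<lambda>a b. a \<in> K - T \<and> b \<in> K - T \<and> facet_adj (Suc m) a b"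
  have CKT: "C v \<subseteq> K - T" for v unfolding C_def by auto
  have conn: "?R\<^sup>*\<^sup>* \<sigma> \<tau>" if st: "\<sigma> \<in> K - T" "\<tau> \<in> K - T" for \<sigma> \<tau>
  proof -
    obtain u where u: "u \<in> \<sigma>" "good u" using G2[OF st(1)] by blast
    obtain w where w: "w \<in> \<tau>" "good w" using G2[OF st(2)] by blast
    have sC: "\<sigma> \<in> C u" "\<tau> \<in> C w" using u w st unfolding C_def by auto
    have inC: "?R\<^sup>*\<^sup>* a b" if "good x" "a \<in> C x" "b \<in> C x" for a b x
      using G1[OF that(1)] that(2,3) rt_mono[OF _ CKT[of x]] unfolding graph_connected_def by blast
    show ?thesis
    proof (cases "u = w")
      case True then show ?thesis using inC[OF u(2)] sC by auto
    next
      case False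
      obtain \<kappa> where k: "\<kappa> \<in> K - T" "u \<in> \<kappa>" "w \<in> \<kappa>" using G3[OF u(2) w(2) False] by blast
      then have "\<kappa> \<in> C u" "\<kappa> \<in> C w" unfolding C_def by auto
      then show ?thesis using inC[OF u(2) sC(1)] inC[OF w(2) _ sC(2)]
        by (meson rtranclp_trans)
    qed
  qed
  obtain v where "good v" using exg by blast
  then have "C v \<noteq> {}" using G1 unfolding graph_connected_def by blast
  then have "K - T \<noteq> {}" using CKT by blast
  then show ?case unfolding graph_connected_def using conn by blast
qed


theorem corollary4p5:
  fixes d r n :: nat and K :: "nat set set"
  assumes "d \<ge> 1" and "r \<ge> 1" and "n \<ge> d + 2"
    and "K \<subseteq> simplices n d"
    and "\<forall>H :: nat set \<Rightarrow> 'a::field. hypercut n d H \<longrightarrow> card (supp H \<inter> K) \<ge> r"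
  shows "k_connected (facet_adj d) K (d + r - 1)"
  unfolding k_connected_def
proof (intro allI impI)
  fix S assume S: "S \<subseteq> K \<and> finite S \<and> card S < d + r - 1"
  obtain S' where S': "S' \<subseteq> S" "card S' = min (card S) (r-1)" "finite S'"
    using obtain_subset_with_card_n[of "min (card S) (r-1)" S] by auto
  define T where "T = S - S'"
  have cT: "card T = card S - card S'" unfolding T_def using card_Diff_subset[OF S'(3) S'(1)] .
  have cT2: "card T < max 1 d" using cT S'(2) S assms(1,2) by auto
  have KS: "K - S = (K - S') - T" using S' unfolding T_def by auto
  have cc: "cutcond {1..n} d (K - S')"
  proof (rule ccontr)
    assume "\<not> cutcond {1..n} d (K - S')"
    then obtain \<nu> X where h: "\<nu> \<subseteq> {1..n}" "card \<nu> + 1 = d" "X \<subseteq> {1..n} - \<nu>" "X \<noteq> {}"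
      "X \<noteq> {1..n} - \<nu>" "\<not>(\<exists>\<sigma>\<in>K - S'. \<exists>x\<in>X. \<exists>y\<in>{1..n}-\<nu>-X. \<sigma> = insert x (insert y \<nu>))"
      unfolding cutcond_def by blast
    obtain a where a: "a \<in> X" using h(4) by blast
    obtain b where b: "b \<in> {1..n} - \<nu> - X" using h(3,5) by blast
    obtain Z :: "nat set \<Rightarrow> 'a" where Z: "cocycle n d Z" "Z \<noteq> (\<lambda>_. 0)" "supp Z \<inter> (K - S') = {}"
      using cut_cocycle[OF assms(1) h(1,2) h(3) a b, of "K - S'", where 'a='a] assms(4) h(6) by blast
    obtain H :: "nat set \<Rightarrow> 'a" where H: "hypercut n d H" "supp H \<subseteq> supp Z"
      using hypercut_below[OF Z(1,2)] by blast
    have r1: "card (supp H \<inter> K) \<ge> r" using assms(5) H(1) by blast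
    have "supp H \<inter> K \<subseteq> S'" using Z(3) H(2) by auto
    then have "card (supp H \<inter> K) \<le> card S'" using S'(3) card_mono by blast
    then show False using r1 S'(2) assms(2) by linarith
  qed
  have sim: "\<forall>\<sigma>\<in>K - S'. \<sigma> \<subseteq> {1..n} \<and> card \<sigma> = d + 1" using assms(4) unfolding simplices_def by auto
  have TK: "T \<subseteq> K - S'" using S unfolding T_def by auto
  show "graph_connected (facet_adj d) (K - S)" unfolding KS
    by (rule comb[OF assms(1) _ _ sim cc TK cT2]) (use assms(3) in auto)
qed

end
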